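(* Let $A\in\mathbb{R}^{d\times d}$ be invertible, $\bm{b}\in\mathbb{R}^d$, $\bm{x}^\ast=A^{-1}\bm{b}$, $\bm{x}_0\in\mathbb{R}^d$ with $\bm{x}_0\ne\bm{x}^\ast$, $\Sigma_0$ symmetric positive-definite. Let $\bm{x}_m$ be the BayesCG mean defined by the recursion: $\bm{r}_0=\bm{b}-A\bm{x}_0$, $\tilde{\bm{s}}_1=\bm{r}_0$, $\bm{s}_k=\tilde{\bm{s}}_k/\|\tilde{\bm{s}}_k\|_{A\Sigma_0A^\top}$, $\bm{x}_k=\bm{x}_0+\Sigma_0A^\top S_k\Lambda_k^{-1}S_k^\top\bm{r}_0$ with $S_k=[\bm{s}_1,\dots,\bm{s}_k]$, $\Lambda_k=S_k^\top A\Sigma_0A^\top S_k$, $\bm{r}_k=\bm{b}-A\bm{x}_k$, $\tilde{\bm{s}}_{k+1}=\bm{r}_k-\langle\bm{s}_k,\bm{r}_k\rangle_{A\Sigma_0A^\top}\bm{s}_k$, assuming $\tilde{\bm{s}}_1,\dots,\tilde{\bm{s}}_m\ne\bm{0}$. Let $\kappa=\kappa(\Sigma_0A^\top A)=\|\Sigma_0A^\top A\|_2\,\|(\Sigma_0A^\top A)^{-1}\|_2$. Then \[\frac{\|\bm{x}_m-\bm{x}^\ast\|_{\Sigma_0^{-1}}}{\|\bm{x}_0-\bm{x}^\ast\|_{\Sigma_0^{-1}}}\le2\left(\frac{\sqrt{\kappa}-1}{\sqrt{\kappa}+1}\right)^m.\]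
   Context: $\langle\bm{u},\bm{v}\rangle_{B}=\bm{u}^\top B\bm{v}$, $\|\bm{v}\|_B=\sqrt{\bm{v}^\top B\bm{v}}$ for symmetric positive-definite $B$; $\|\cdot\|_2$ is the matrix operator 2-norm. *)

theory Defs
  imports "HOL-Analysis.Analysis"
begin

section \<open>Conventions\<close>

text \<open>Vectors in R^d are real^'n, d x d matrices are real^'n^'n.
  Small k x k matrices (k varies with the iteration) are represented as
  functions nat => nat => real, meaningful only on indices below k.\<close>

definition spd :: "real^'n^'n \<Rightarrow> bool" where
  "spd M \<longleftrightarrow> transpose M = M \<and> (\<forall>v. v \<noteq> 0 \<longrightarrow> v \<bullet> (M *v v) > 0)"

definition Binner :: "real^'n^'n \<Rightarrow> real^'n \<Rightarrow> real^'n \<Rightarrow> real" where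
  "Binner B u v = u \<bullet> (B *v v)"

definition Bnorm :: "real^'n^'n \<Rightarrow> real^'n \<Rightarrow> real" where
  "Bnorm B v = sqrt (v \<bullet> (B *v v))"

text \<open>Operator 2-norm of a matrix and the 2-norm condition number.\<close>
definition opnorm2 :: "real^'n^'n \<Rightarrow> real" where
  "opnorm2 M = onorm (\<lambda>v. M *v v)"

definition cond2 :: "real^'n^'n \<Rightarrow> real" where
  "cond2 M = opnorm2 M * opnorm2 (matrix_inv M)"

text \<open>k x k matrix product and inverse (entries outside {0..<k} are zero).\<close>
definition kmult :: "nat \<Rightarrow> (nat \<Rightarrow> nat \<Rightarrow> real) \<Rightarrow> (nat \<Rightarrow> nat \<Rightarrow> real) \<Rightarrow> nat \<Rightarrow> nat \<Rightarrow> real" where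
  "kmult k M N = (\<lambda>i j. \<Sum>l<k. M i l * N l j)"

definition kinv :: "nat \<Rightarrow> (nat \<Rightarrow> nat \<Rightarrow> real) \<Rightarrow> nat \<Rightarrow> nat \<Rightarrow> real" where
  "kinv k M = (THE N. (\<forall>i j. (k \<le> i \<or> k \<le> j) \<longrightarrow> N i j = 0)
      \<and> (\<forall>i<k. \<forall>j<k. kmult k N M i j = (if i = j then 1 else 0))
      \<and> (\<forall>i<k. \<forall>j<k. kmult k M N i j = (if i = j then 1 else 0)))"

section \<open>BayesCG\<close>

text \<open>Given the list Ss = [s_1,...,s_k] (stored at indices 0..k-1), the BayesCG mean
  x_k = x_0 + Sigma0 A^T S_k Lambda_k^{-1} S_k^T r_0,
  Lambda_k = S_k^T A Sigma0 A^T S_k.\<close>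
definition bcg_mean :: "real^'n^'n \<Rightarrow> real^'n^'n \<Rightarrow> real^'n \<Rightarrow> real^'n \<Rightarrow> (real^'n) list \<Rightarrow> real^'n" where
  "bcg_mean A Sig b x0 Ss =
     (let k = length Ss;
          B = A ** Sig ** transpose A;
          r0 = b - A *v x0;
          Lam = (\<lambda>i j. Ss ! i \<bullet> (B *v (Ss ! j)));
          StR = (\<lambda>j. Ss ! j \<bullet> r0);
          w = (\<lambda>i. \<Sum>j<k. kinv k Lam i j * StR j)
      in x0 + (Sig ** transpose A) *v (\<Sum>i<k. w i *\<^sub>R Ss ! i))"

text \<open>The list [stilde_1, ..., stilde_k] of unnormalised search directions.\<close>
fun bcg_stildes :: "real^'n^'n \<Rightarrow> real^'n^'n \<Rightarrow> real^'n \<Rightarrow> real^'n \<Rightarrow> nat \<Rightarrow> (real^'n) list" where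
  "bcg_stildes A Sig b x0 0 = []"
| "bcg_stildes A Sig b x0 (Suc k) =
     (let B = A ** Sig ** transpose A;
          Ts = bcg_stildes A Sig b x0 k;
          Ss = map (\<lambda>t. (1 / Bnorm B t) *\<^sub>R t) Ts;
          xk = bcg_mean A Sig b x0 Ss;
          rk = b - A *v xk;
          new = (if k = 0 then rk else rk - Binner B (last Ss) rk *\<^sub>R last Ss)
      in Ts @ [new])"

text \<open>stilde_k for k >= 1.\<close>
definition bcg_stilde :: "real^'n^'n \<Rightarrow> real^'n^'n \<Rightarrow> real^'n \<Rightarrow> real^'n \<Rightarrow> nat \<Rightarrow> real^'n" where
  "bcg_stilde A Sig b x0 k = bcg_stildes A Sig b x0 k ! (k - 1)"

text \<open>s_1, ..., s_k as a list.\<close>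
definition bcg_dirs :: "real^'n^'n \<Rightarrow> real^'n^'n \<Rightarrow> real^'n \<Rightarrow> real^'n \<Rightarrow> nat \<Rightarrow> (real^'n) list" where
  "bcg_dirs A Sig b x0 k =
     map (\<lambda>t. (1 / Bnorm (A ** Sig ** transpose A) t) *\<^sub>R t) (bcg_stildes A Sig b x0 k)"

text \<open>The BayesCG mean x_k.\<close>
definition bcg_x :: "real^'n^'n \<Rightarrow> real^'n^'n \<Rightarrow> real^'n \<Rightarrow> real^'n \<Rightarrow> nat \<Rightarrow> real^'n" where
  "bcg_x A Sig b x0 k = bcg_mean A Sig b x0 (bcg_dirs A Sig b x0 k)"

end

theory Submission
  imports Defs
begin
lemma inv_facts:
  fixes X :: "real^'n^'n"
  assumes "invertible X"
  shows "X ** matrix_inv X = mat 1" "matrix_inv X ** X = mat 1"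
proof -
  have "\<exists>A'. X ** A' = mat 1 \<and> A' ** X = mat 1" using assms unfolding invertible_def by blast
  then have "X ** matrix_inv X = mat 1 \<and> matrix_inv X ** X = mat 1"
    unfolding matrix_inv_def by (rule someI_ex)
  then show "X ** matrix_inv X = mat 1" "matrix_inv X ** X = mat 1" by auto
qed

lemma inv_vec:
  fixes X :: "real^'n^'n"
  assumes "invertible X"
  shows "X *v (matrix_inv X *v v) = v" "matrix_inv X *v (X *v v) = v"
  using inv_facts[OF assms] by (simp_all add: matrix_vector_mul_assoc)

lemma inner_mat_transpose:
  fixes M :: "real^'n^'n"
  shows "(M *v x) \<bullet> y = x \<bullet> (transpose M *v y)"
  by (metis dot_lmul_matrix vector_transpose_matrix)

lemma inner_mat_sym:
  fixes M :: "real^'n^'n"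
  assumes "transpose M = M"
  shows "(M *v x) \<bullet> y = x \<bullet> (M *v y)"
  using inner_mat_transpose[of M x y] assms by simp

lemma spd_invertible:
  fixes S :: "real^'n^'n"
  assumes "spd S" shows "invertible S"
proof -
  have "\<forall>x. S *v x = 0 \<longrightarrow> x = 0"
  proof (intro allI impI)
    fix x assume "S *v x = 0"
    then have "x \<bullet> (S *v x) = 0" by simp
    then show "x = 0" using assms unfolding spd_def by force
  qed
  then show ?thesis using invertible_left_inverse matrix_left_invertible_ker by blast
qed

lemma quad_zero:
  fixes c d :: real
  assumes "\<And>t. t * c + t^2 * d \<le> 0"
  shows "c = 0"
proof (rule ccontr)
  assume c: "c \<noteq> 0"
  define s where "s = 1 / (\<bar>d\<bar> + 1)"
  have s: "s > 0" "s * \<bar>d\<bar> < 1" unfolding s_def by (auto simp: field_simps)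
  have "(s*c) * c + (s*c)^2 * d \<le> 0" by (rule assms)
  then have "c^2 * (s * (1 + s * d)) \<le> 0" by (simp add: power2_eq_square algebra_simps)
  moreover have "c^2 > 0" using c by simp
  moreover have "s * (1 + s * d) > 0"
  proof -
    have "-\<bar>d\<bar> \<le> d" by simp
    then have "s * (-\<bar>d\<bar>) \<le> s * d" using s by (intro mult_left_mono) auto
    then have "s * d \<ge> - (s * \<bar>d\<bar>)" by simp
    then have "1 + s * d > 0" using s by linarith
    then show ?thesis using s by simp
  qed
  ultimately show False by (metis mult_pos_pos not_le)
qed

declare transpose_matrix_vector[simp del]

lemma kinv_id:
  assumes "\<forall>i<k. \<forall>j<k. Lam i j = (if i = j then 1 else 0)"
  shows "kinv k Lam = (\<lambda>i j. if i < k \<and> i = j then 1 else 0)"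
  unfolding kinv_def
proof (rule the_equality)
  have e: "(\<Sum>l<k. (if i < k \<and> i = l then 1 else 0) * Lam l j) = (if i = j then 1 else 0)"
    if "i < k" "j < k" for i j
  proof -
    have "(\<Sum>l<k. (if i < k \<and> i = l then 1 else 0) * Lam l j) = (\<Sum>l<k. if l = i then Lam i j else 0)"
      by (rule sum.cong) (auto simp: that)
    also have "\<dots> = Lam i j" using that by simp
    finally show ?thesis using assms that by simp
  qed
  have e2: "(\<Sum>l<k. Lam i l * (if l < k \<and> l = j then 1 else 0)) = (if i = j then 1 else 0)"
    if "i < k" "j < k" for i j
  proof -
    have "(\<Sum>l<k. Lam i l * (if l < k \<and> l = j then 1 else 0)) = (\<Sum>l<k. if l = j then Lam i j else 0)"
      by (rule sum.cong) auto
    also have "\<dots> = Lam i j" using that by simp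
    finally show ?thesis using assms that by simp
  qed
  show "(\<forall>i j. (k \<le> i \<or> k \<le> j) \<longrightarrow> (if i < k \<and> i = j then 1 else 0) = (0::real)) \<and>
    (\<forall>i<k. \<forall>j<k. kmult k (\<lambda>i j. if i < k \<and> i = j then 1 else 0) Lam i j = (if i = j then 1 else 0)) \<and>
    (\<forall>i<k. \<forall>j<k. kmult k Lam (\<lambda>i j. if i < k \<and> i = j then 1 else 0) i j = (if i = j then 1 else 0))"
    using e e2 unfolding kmult_def by auto
next
  fix N assume N: "(\<forall>i j. (k \<le> i \<or> k \<le> j) \<longrightarrow> N i j = 0) \<and>
    (\<forall>i<k. \<forall>j<k. kmult k N Lam i j = (if i = j then 1 else 0)) \<and>
    (\<forall>i<k. \<forall>j<k. kmult k Lam N i j = (if i = j then 1 else 0))"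
  show "N = (\<lambda>i j. if i < k \<and> i = j then 1 else 0)"
  proof (intro ext)
    fix i j
    show "N i j = (if i < k \<and> i = j then 1 else 0)"
    proof (cases "i < k \<and> j < k")
      case True
      have "kmult k N Lam i j = (\<Sum>l<k. if l = j then N i j else 0)"
        unfolding kmult_def by (rule sum.cong) (use assms True in auto)
      also have "\<dots> = N i j" using True by simp
      finally show ?thesis using N True by auto
    next
      case False then show ?thesis using N by auto
    qed
  qed
qed

lemma stildes_length: "length (bcg_stildes A Sig b x0 k) = k"
  by (induction k) (simp_all add: Let_def)

lemma stildes_prefix: "k \<le> k' \<Longrightarrow> bcg_stildes A Sig b x0 k = take k (bcg_stildes A Sig b x0 k')"
proof (induction k' )
  case 0 then show ?case by simp
next
  case (Suc k')
  show ?case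
  proof (cases "k = Suc k'")
    case True then show ?thesis by (metis stildes_length take_all order_refl)
  next
    case False
    then have "k \<le> k'" using Suc by simp
    then show ?thesis using Suc by (simp add: Let_def stildes_length)
  qed
qed

locale bcg_setup =
  fixes A Sig :: "real^'n^'n" and b x0 :: "real^'n"
  assumes invA: "invertible A" and spdS: "spd Sig"
begin

definition "B = A ** Sig ** transpose A"
definition "r0 = b - A *v x0"
definition "Bf v = B *v v"
definition "dirs k = bcg_dirs A Sig b x0 k"
definition "K j = span ((\<lambda>l. (Bf ^^ l) r0) ` {..<j})"
definition "V j = span (set (dirs j))"
definition "L v = (Sig ** transpose A) *v v"
definition "nz t = (1 / Bnorm B t) *\<^sub>R t"
definition "xk k = bcg_mean A Sig b x0 (dirs k)"
definition "rk k = b - A *v xk k"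
definition "newk k = (if k = 0 then rk k else rk k - Binner B (last (dirs k)) (rk k) *\<^sub>R last (dirs k))"
definition "ON k = (\<forall>i<k. \<forall>j<k. dirs k ! i \<bullet> (B *v dirs k ! j) = (if i = j then 1 else 0))"
definition "vk k = (\<Sum>i<k. (dirs k ! i \<bullet> r0) *\<^sub>R dirs k ! i)"

lemma Sig_sym: "transpose Sig = Sig" using spdS unfolding spd_def by simp

lemma B_sym: "transpose B = B"
  unfolding B_def by (simp add: matrix_transpose_mul Sig_sym matrix_mul_assoc)

lemma B_inner_sym: "(B *v x) \<bullet> y = x \<bullet> (B *v y)"
  using inner_mat_sym[OF B_sym] .

lemma B_pos: "v \<noteq> 0 \<Longrightarrow> v \<bullet> (B *v v) > 0"
proof -
  assume v: "v \<noteq> 0"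
  have "transpose A *v v \<noteq> 0"
    using v inj_matrix_vector_mult[OF transpose_invertible[OF invA]]
    by (metis inj_eq matrix_vector_mult_0_right)
  then have "(transpose A *v v) \<bullet> (Sig *v (transpose A *v v)) > 0"
    using spdS unfolding spd_def by blast
  moreover have "v \<bullet> (B *v v) = (transpose A *v v) \<bullet> (Sig *v (transpose A *v v))"
  proof -
    have "B *v v = A *v (Sig *v (transpose A *v v))"
      unfolding B_def by (simp add: matrix_vector_mul_assoc matrix_mul_assoc)
    then show ?thesis using inner_mat_transpose[of "transpose A" v] by simp
  qed
  ultimately show ?thesis by simp
qed

lemma A_L: "A *v L v = Bf v"
  unfolding L_def Bf_def B_def by (simp add: matrix_vector_mul_assoc matrix_mul_assoc)

lemma Bf_linear: "linear Bf"
  unfolding Bf_def[abs_def] by simp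

lemma L_linear: "linear L"
  unfolding L_def[abs_def] by simp

lemma stildes_Suc: "bcg_stildes A Sig b x0 (Suc k) = bcg_stildes A Sig b x0 k @ [newk k]"
  by (simp add: Let_def newk_def rk_def xk_def dirs_def bcg_dirs_def B_def)

lemma stp: "k \<le> k' \<Longrightarrow> bcg_stildes A Sig b x0 k = take k (bcg_stildes A Sig b x0 k')"
  by (rule stildes_prefix)

lemma dirs_length: "length (dirs k) = k"
  by (simp add: dirs_def bcg_dirs_def stildes_length)

lemma dirs_Suc: "dirs (Suc k) = dirs k @ [nz (newk k)]"
  unfolding dirs_def bcg_dirs_def stildes_Suc by (simp add: nz_def B_def)

lemma dirs_prefix: "k \<le> k' \<Longrightarrow> i < k \<Longrightarrow> dirs k ! i = dirs k' ! i"
proof -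
  assume a: "k \<le> k'" "i < k"
  have "bcg_stildes A Sig b x0 k ! i = bcg_stildes A Sig b x0 k' ! i"
    using stp[OF a(1)] a(2) by simp
  moreover have "i < length (bcg_stildes A Sig b x0 k)" "i < length (bcg_stildes A Sig b x0 k')"
    using a by (simp_all add: stildes_length)
  ultimately show ?thesis
    unfolding dirs_def bcg_dirs_def by simp
qed

lemma dirs_nth_V: "i < k \<Longrightarrow> dirs k ! i \<in> V k"
  unfolding V_def by (simp add: span_base dirs_length)

lemma V_mono: "k \<le> k' \<Longrightarrow> V k \<subseteq> V k'"
  unfolding V_def
proof (rule span_mono)
  assume "k \<le> k'"
  then have "dirs k = take k (dirs k')"
    unfolding dirs_def bcg_dirs_def by (simp add: stp take_map)
  then show "set (dirs k) \<subseteq> set (dirs k')"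
    by (simp add: set_take_subset)
qed

lemma K_mono: "k \<le> k' \<Longrightarrow> K k \<subseteq> K k'"
  unfolding K_def by (rule span_mono) auto

lemma K_Suc: "K (Suc j) = span (insert ((Bf ^^ j) r0) ((\<lambda>l. (Bf ^^ l) r0) ` {..<j}))"
  unfolding K_def by (simp add: lessThan_Suc)

lemma Bf_K: "Bf ` K j \<subseteq> K (Suc j)"
proof -
  have "Bf ` K j = span (Bf ` ((\<lambda>l. (Bf ^^ l) r0) ` {..<j}))"
    unfolding K_def using span_linear_image[OF Bf_linear] by simp
  also have "\<dots> \<subseteq> K (Suc j)"
    unfolding K_def
  proof (rule span_mono, clarsimp)
    fix l assume "l < j"
    then show "Bf ((Bf ^^ l) r0) \<in> (\<lambda>l. (Bf ^^ l) r0) ` {..<Suc j}"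
      by (intro image_eqI[where x="Suc l"]) auto
  qed
  finally show ?thesis .
qed

lemma mean_formula:
  assumes "ON k"
  shows "xk k = x0 + L (vk k)"
proof -
  have Lam: "\<forall>i<k. \<forall>j<k. (\<lambda>i j. dirs k ! i \<bullet> (B *v dirs k ! j)) i j = (if i = j then 1 else 0)"
    using assms unfolding ON_def by simp
  have w: "(\<Sum>j<k. kinv k (\<lambda>i j. dirs k ! i \<bullet> (B *v dirs k ! j)) i j * (dirs k ! j \<bullet> r0))
      = dirs k ! i \<bullet> r0" if "i < k" for i
  proof -
    have "(\<Sum>j<k. kinv k (\<lambda>i j. dirs k ! i \<bullet> (B *v dirs k ! j)) i j * (dirs k ! j \<bullet> r0))
      = (\<Sum>j<k. if j = i then dirs k ! i \<bullet> r0 else 0)"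
      unfolding kinv_id[OF Lam] by (rule sum.cong) (auto simp: that)
    then show ?thesis using that by simp
  qed
  show ?thesis
    unfolding xk_def bcg_mean_def Let_def dirs_length L_def vk_def
    apply (simp add: B_def[symmetric] r0_def[symmetric])
    apply (rule arg_cong[where f="\<lambda>v. _ *v v"])
    apply (rule sum.cong)
     apply (simp_all add: w)
    done
qed

end

locale bcg_nz = bcg_setup +
  fixes m :: nat
  assumes nzh: "\<forall>k\<in>{1..m}. bcg_stilde A Sig b x0 k \<noteq> 0"
begin

lemma newk_nz: "k < m \<Longrightarrow> newk k \<noteq> 0"
proof -
  assume "k < m"
  then have "bcg_stilde A Sig b x0 (Suc k) \<noteq> 0" using nzh by auto
  then show ?thesis unfolding bcg_stilde_def using stildes_Suc stildes_length
    by (metis diff_Suc_1 nth_append_length)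
qed

lemma rk_formula: "ON k \<Longrightarrow> rk k = r0 - Bf (vk k)"
  unfolding rk_def mean_formula r0_def by (simp add: matrix_vector_right_distrib A_L)

lemma rk_orth: assumes "ON k" "l < k" shows "dirs k ! l \<bullet> rk k = 0"
proof -
  have "dirs k ! l \<bullet> Bf (vk k) = (\<Sum>i<k. (dirs k ! i \<bullet> r0) * (dirs k ! l \<bullet> (B *v dirs k ! i)))"
    unfolding vk_def linear_sum[OF Bf_linear] by (simp add: inner_sum_right Bf_def matrix_vector_mult_scaleR)
  also have "\<dots> = (\<Sum>i<k. if i = l then dirs k ! l \<bullet> r0 else 0)"
    by (rule sum.cong) (use assms in \<open>auto simp: ON_def\<close>)
  also have "\<dots> = dirs k ! l \<bullet> r0" using assms by simp
  finally show ?thesis using rk_formula[OF assms(1)] by (simp add: inner_diff_right)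
qed

lemma rk_orth_V: assumes "ON k" "v \<in> V k" shows "v \<bullet> rk k = 0"
proof -
  have "orthogonal (rk k) v"
    using assms(2) unfolding V_def
  proof (rule orthogonal_to_span)
    fix y assume "y \<in> set (dirs k)"
    then obtain l where "l < k" "y = dirs k ! l" by (metis in_set_conv_nth dirs_length)
    then show "orthogonal (rk k) y" using rk_orth[OF assms(1)] unfolding orthogonal_def
      by (simp add: inner_commute)
  qed
  then show ?thesis unfolding orthogonal_def by (simp add: inner_commute)
qed

lemma vk_V: "vk k \<in> V k"
  unfolding vk_def V_def by (intro span_sum span_scale span_base) (simp add: dirs_length)

lemma dirs0: "dirs 0 = []" by (simp add: dirs_def bcg_dirs_def)

lemma V0: "V 0 = {0}" by (simp add: V_def dirs0)

lemma main: "k \<le> m \<Longrightarrow> ON k \<and> (\<forall>j\<le>k. V j = K j)"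
proof (induction k)
  case 0
  show ?case by (simp add: ON_def V_def K_def dirs0)
next
  case (Suc k)
  then have km: "k < m" and ONk: "ON k" and VK: "\<And>j. j \<le> k \<Longrightarrow> V j = K j" by auto
  define s where "s = dirs k"
  define \<nu> where "\<nu> = newk k"
  define \<beta> where "\<beta> = Bnorm B \<nu>"
  have nu0: "\<nu> \<noteq> 0" using newk_nz[OF km] \<nu>_def by simp
  have nuB: "\<nu> \<bullet> (B *v \<nu>) > 0" using B_pos[OF nu0] .
  have beta: "\<beta> > 0" "\<beta>^2 = \<nu> \<bullet> (B *v \<nu>)" using nuB unfolding \<beta>_def Bnorm_def by auto
  have dS: "dirs (Suc k) ! i = (if i < k then s ! i else nz \<nu>)" if "i < Suc k" for i
    using that unfolding dirs_Suc s_def \<nu>_def by (auto simp: nth_append dirs_length)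
  have lenS: "length s = k" by (simp add: s_def dirs_length)
  define c where "c = Binner B (last s) (rk k)"
  have lastS: "k > 0 \<Longrightarrow> last s = s ! (k - 1)"
  proof -
    assume "k > 0" then have "s \<noteq> []" using lenS by auto
    then show ?thesis using lenS by (simp add: last_conv_nth)
  qed
  have nu_def2: "k > 0 \<Longrightarrow> \<nu> = rk k - c *\<^sub>R s ! (k - 1)"
    unfolding \<nu>_def newk_def c_def using lastS s_def by simp
  have c_def2: "k > 0 \<Longrightarrow> c = s ! (k - 1) \<bullet> (B *v rk k)"
    unfolding c_def Binner_def using lastS by simp
  have nu_k0: "k = 0 \<Longrightarrow> \<nu> = rk k" unfolding \<nu>_def newk_def by simp
  have ONs: "\<And>i j. i < k \<Longrightarrow> j < k \<Longrightarrow> s ! i \<bullet> (B *v s ! j) = (if i = j then 1 else 0)"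
    using ONk unfolding ON_def s_def by simp
  have s_in_V: "\<And>i. i < k \<Longrightarrow> s ! i \<in> V k" unfolding s_def by (rule dirs_nth_V)
  have Bs_V: "B *v s ! l \<in> V k" if "Suc l < k" for l
  proof -
    have "s ! l = dirs (Suc l) ! l" unfolding s_def using that dirs_prefix[of "Suc l" k l] by simp
    then have "s ! l \<in> V (Suc l)" by (simp add: dirs_nth_V)
    then have "s ! l \<in> K (Suc l)" using VK[of "Suc l"] that by simp
    then have "Bf (s ! l) \<in> K (Suc (Suc l))" using Bf_K by blast
    then have "Bf (s ! l) \<in> K k" using K_mono[of "Suc (Suc l)" k] that by auto
    then show ?thesis using VK[of k] by (simp add: Bf_def)
  qed
  have orth_nu: "s ! l \<bullet> (B *v \<nu>) = 0" if "l < k" for l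
  proof -
    have kp: "k > 0" using that by simp
    have "s ! l \<bullet> (B *v \<nu>) = s ! l \<bullet> (B *v rk k) - c * (s ! l \<bullet> (B *v s ! (k - 1)))"
      unfolding nu_def2[OF kp] by (simp add: matrix_vector_mult_diff_distrib matrix_vector_mult_scaleR inner_diff_right)
    also have "\<dots> = 0"
    proof (cases "l = k - 1")
      case True then show ?thesis using ONs[of l l] that c_def2[OF kp] by simp
    next
      case False
      then have "Suc l < k" using that by simp
      then have "(B *v s ! l) \<bullet> rk k = 0" using rk_orth_V[OF ONk Bs_V] by simp
      then have "s ! l \<bullet> (B *v rk k) = 0" by (simp add: B_inner_sym)
      then show ?thesis using ONs[of l "k-1"] False that by simp
    qed
    finally show ?thesis .
  qed
  have ON1: "ON (Suc k)"
    unfolding ON_def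
  proof (intro allI impI)
    fix i j assume ij: "i < Suc k" "j < Suc k"
    show "dirs (Suc k) ! i \<bullet> (B *v dirs (Suc k) ! j) = (if i = j then 1 else 0)"
    proof (cases "i < k")
      case ik: True
      show ?thesis
      proof (cases "j < k")
        case True then show ?thesis using ik ij ONs by (simp add: dS)
      next
        case False
        then have "j = k" using ij by simp
        then show ?thesis using ik ij orth_nu[OF ik]
          by (simp add: dS nz_def matrix_vector_mult_scaleR)
      qed
    next
      case ik: False
      then have i: "i = k" using ij by simp
      show ?thesis
      proof (cases "j < k")
        case True
        have "\<nu> \<bullet> (B *v s ! j) = 0" using orth_nu[OF True] B_inner_sym[of \<nu> "s ! j"]
          by (simp add: inner_commute)
        then show ?thesis using True i ij by (simp add: dS nz_def matrix_vector_mult_scaleR)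
      next
        case False
        then have "j = k" using ij by simp
        moreover have "(1 / \<beta>) * ((1 / \<beta>) * (\<nu> \<bullet> (B *v \<nu>))) = 1"
          using beta nuB by (simp add: field_simps power2_eq_square)
        ultimately show ?thesis using i ij nuB
          by (simp add: dS nz_def matrix_vector_mult_scaleR \<beta>_def)
      qed
    qed
  qed
  have VSk: "V (Suc k) = span (insert (nz \<nu>) (set s))"
    unfolding V_def dirs_Suc s_def \<nu>_def by simp
  have rk_K: "rk k \<in> K (Suc k)"
  proof -
    have "r0 \<in> K (Suc k)" unfolding K_def by (rule span_base) (auto intro: image_eqI[where x=0])
    moreover have "Bf (vk k) \<in> K (Suc k)" using vk_V VK[of k] Bf_K by blast
    ultimately show ?thesis using rk_formula[OF ONk] by (simp add: span_diff K_def)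
  qed
  have s_K: "\<And>i. i < k \<Longrightarrow> s ! i \<in> K (Suc k)"
    using s_in_V VK[of k] K_mono[of k "Suc k"] by auto
  have nu_K: "\<nu> \<in> K (Suc k)"
  proof (cases "k = 0")
    case True then show ?thesis using nu_k0 rk_K by simp
  next
    case False
    then show ?thesis using nu_def2 rk_K s_K[of "k - 1"] unfolding K_def
      by (simp add: span_diff span_scale)
  qed
  have sub1: "V (Suc k) \<subseteq> K (Suc k)"
    unfolding VSk
  proof (rule span_minimal)
    show "subspace (K (Suc k))" unfolding K_def by (rule subspace_span)
    show "insert (nz \<nu>) (set s) \<subseteq> K (Suc k)"
      using nu_K s_K lenS unfolding nz_def K_def by (auto simp: span_scale in_set_conv_nth)
  qed
  have nu_V: "\<nu> \<in> V (Suc k)"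
  proof -
    have "nz \<nu> \<in> V (Suc k)" using dirs_nth_V[of k "Suc k"] dS[of k] by simp
    then have "\<beta> *\<^sub>R nz \<nu> \<in> V (Suc k)" unfolding V_def by (rule span_scale)
    then show ?thesis using beta unfolding nz_def \<beta>_def by simp
  qed
  have rk_V: "rk k \<in> V (Suc k)"
  proof (cases "k = 0")
    case True then show ?thesis using nu_V nu_k0 by simp
  next
    case False
    then have "rk k = \<nu> + c *\<^sub>R s ! (k - 1)" using nu_def2 by simp
    moreover have "s ! (k - 1) \<in> V (Suc k)" using s_in_V[of "k - 1"] False V_mono[of k "Suc k"] by auto
    ultimately show ?thesis using nu_V unfolding V_def by (simp add: span_add span_scale)
  qed
  have VkVSk: "V k \<subseteq> V (Suc k)" by (rule V_mono) simp
  have top: "(Bf ^^ k) r0 \<in> V (Suc k)"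
  proof (cases "k = 0")
    case True
    then have "vk k = 0" using vk_V[of 0] V0 by simp
    then have "rk k = r0" using rk_formula[OF ONk] linear_0[OF Bf_linear] by simp
    then show ?thesis using rk_V True by simp
  next
    case False
    then obtain k' where k': "k = Suc k'" by (cases k) auto
    have "vk k \<in> K (Suc k')" using vk_V[of k] VK[of k] k' by simp
    then have "vk k \<in> span (insert ((Bf ^^ k') r0) ((\<lambda>l. (Bf ^^ l) r0) ` {..<k'}))"
      by (simp only: K_Suc)
    then obtain \<gamma> where g: "vk k - \<gamma> *\<^sub>R (Bf ^^ k') r0 \<in> K k'"
      unfolding span_insert K_def by blast
    define v' where "v' = vk k - \<gamma> *\<^sub>R (Bf ^^ k') r0"
    have Bv': "Bf v' \<in> K k" using g Bf_K k' v'_def by blast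
    have Bvk: "Bf (vk k) = Bf v' + \<gamma> *\<^sub>R (Bf ^^ k) r0"
      unfolding v'_def k' using Bf_linear by (simp add: linear_diff linear_scale)
    have r0K: "r0 \<in> K k" unfolding K_def k' by (rule span_base) (auto intro: image_eqI[where x=0])
    have rkeq: "rk k = r0 - Bf v' - \<gamma> *\<^sub>R (Bf ^^ k) r0"
      using rk_formula[OF ONk] Bvk by (simp add: algebra_simps)
    have g0: "\<gamma> \<noteq> 0"
    proof
      assume "\<gamma> = 0"
      then have "rk k \<in> K k" using rkeq r0K Bv' unfolding K_def by (simp add: span_diff)
      then have "rk k \<in> V k" using VK[of k] by simp
      then have "rk k \<bullet> rk k = 0" using rk_orth_V[OF ONk] by blast
      then have "rk k = 0" by simp
      then have "\<nu> = 0" using nu_def2 c_def2 False by simp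
      then show False using nu0 by simp
    qed
    have "\<gamma> *\<^sub>R (Bf ^^ k) r0 = r0 - Bf v' - rk k"
      using rkeq by (simp add: algebra_simps)
    then have "(1 / \<gamma>) *\<^sub>R (\<gamma> *\<^sub>R (Bf ^^ k) r0) = (1 / \<gamma>) *\<^sub>R (r0 - Bf v' - rk k)"
      by simp
    then have "(Bf ^^ k) r0 = (1 / \<gamma>) *\<^sub>R (r0 - Bf v' - rk k)"
      using g0 by simp
    moreover have "r0 \<in> V (Suc k)" "Bf v' \<in> V (Suc k)"
      using r0K Bv' VK[of k] VkVSk by auto
    ultimately show ?thesis using rk_V unfolding V_def by (simp add: span_diff span_scale)
  qed
  have sub2: "K (Suc k) \<subseteq> V (Suc k)"
    unfolding K_Suc
  proof (rule span_minimal)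
    show "subspace (V (Suc k))" unfolding V_def by (rule subspace_span)
    have "(\<lambda>l. (Bf ^^ l) r0) ` {..<k} \<subseteq> K k" unfolding K_def by (rule span_superset)
    then show "insert ((Bf ^^ k) r0) ((\<lambda>l. (Bf ^^ l) r0) ` {..<k}) \<subseteq> V (Suc k)"
      using top VK[of k] VkVSk by auto
  qed
  show ?case using ON1 sub1 sub2 VK by (auto simp: le_Suc_eq)
qed

end

context bcg_setup begin

definition "G = matrix_inv Sig"
definition "M = Sig ** transpose A ** A"
definition "Mf x = M *v x"
definition "g x y = x \<bullet> (G *v y)"
definition "nA x = (A *v x) \<bullet> (A *v x)"

lemma invS: "invertible Sig" using spd_invertible[OF spdS] .

lemma SG: "Sig *v (G *v y) = y" "G *v (Sig *v y) = y"
  unfolding G_def using inv_vec[OF invS] by auto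

lemma g_sym: "g x y = g y x"
proof -
  have "g x y = (Sig *v (G *v x)) \<bullet> (G *v y)" unfolding g_def SG ..
  also have "\<dots> = (G *v x) \<bullet> (Sig *v (G *v y))" by (rule inner_mat_sym[OF Sig_sym])
  also have "\<dots> = g y x" unfolding g_def SG by (simp add: inner_commute)
  finally show ?thesis .
qed

lemma g_add_left: "g (x + y) z = g x z + g y z" unfolding g_def by (simp add: inner_add_left)
lemma g_add_right: "g x (y + z) = g x y + g x z" unfolding g_def by (simp add: inner_add_right matrix_vector_right_distrib)
lemma g_diff_left: "g (x - y) z = g x z - g y z" unfolding g_def by (simp add: inner_diff_left)
lemma g_diff_right: "g x (y - z) = g x y - g x z" unfolding g_def by (simp add: inner_diff_right matrix_vector_mult_diff_distrib)
lemma g_scale_left: "g (c *\<^sub>R x) z = c * g x z" unfolding g_def by simp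
lemma g_scale_right: "g x (c *\<^sub>R z) = c * g x z" unfolding g_def by (simp add: matrix_vector_mult_scaleR)
lemma g_zero[simp]: "g 0 x = 0" "g x 0 = 0" unfolding g_def by simp_all
lemma g_neg_left: "g (- x) z = - g x z" unfolding g_def by simp
lemma g_neg_right: "g x (- z) = - g x z" using g_diff_right[of x 0 z] by simp

lemmas g_lin = g_add_left g_add_right g_diff_left g_diff_right g_scale_left g_scale_right g_neg_left g_neg_right

lemma g_pos: assumes "x \<noteq> 0" shows "g x x > 0"
proof -
  have z: "G *v x \<noteq> 0" using SG(1)[of x] assms by auto
  have "g x x = (Sig *v (G *v x)) \<bullet> (G *v x)" unfolding g_def SG ..
  also have "\<dots> = (G *v x) \<bullet> (Sig *v (G *v x))" by (simp add: inner_commute)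
  finally show ?thesis using spdS z unfolding spd_def by simp
qed

lemma g_nonneg: "g x x \<ge> 0"
  by (cases "x = 0") (auto dest: g_pos[of x] intro: less_imp_le)

lemma g_zero_iff: "g x x = 0 \<longleftrightarrow> x = 0"
  using g_pos by fastforce

lemma Mf_alt: "Mf x = Sig *v (transpose A *v (A *v x))"
  unfolding Mf_def M_def by (simp add: matrix_vector_mul_assoc matrix_mul_assoc)

lemma g_M: "g (Mf x) y = (A *v x) \<bullet> (A *v y)"
proof -
  have "g (Mf x) y = (Sig *v (transpose A *v (A *v x))) \<bullet> (G *v y)" unfolding g_def Mf_alt ..
  also have "\<dots> = (transpose A *v (A *v x)) \<bullet> (Sig *v (G *v y))" by (rule inner_mat_sym[OF Sig_sym])
  also have "\<dots> = (transpose A *v (A *v x)) \<bullet> y" by (simp add: SG)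
  also have "\<dots> = (A *v x) \<bullet> (A *v y)" using inner_mat_transpose[of "transpose A"] by simp
  finally show ?thesis .
qed

lemma Mf_linear: "linear Mf" unfolding Mf_def[abs_def] by simp

lemma nA_exp: "nA (x + t *\<^sub>R y) = nA x + t * (2 * ((A *v x) \<bullet> (A *v y))) + t^2 * nA y"
  unfolding nA_def
  by (simp add: matrix_vector_right_distrib matrix_vector_mult_scaleR inner_add_left inner_add_right
      inner_commute[of "A *v y" "A *v x"] power2_eq_square algebra_simps)

lemma g_exp: "g (x + t *\<^sub>R y) (x + t *\<^sub>R y) = g x x + t * (2 * g x y) + t^2 * g y y"
  by (simp add: g_lin g_sym[of y x] power2_eq_square algebra_simps)

lemma eigen:
  assumes sg: "\<sigma> \<noteq> (0::real)" and le: "\<And>y. \<sigma> * (nA y - bb * g y y) \<le> 0" and eq: "nA x = bb * g x x"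
  shows "Mf x = bb *\<^sub>R x"
proof -
  have key: "(A *v x) \<bullet> (A *v y) = bb * g x y" for y
  proof -
    have "t * (\<sigma> * (2 * ((A *v x) \<bullet> (A *v y) - bb * g x y))) + t^2 * (\<sigma> * (nA y - bb * g y y)) \<le> 0" for t
      using le[of "x + t *\<^sub>R y"] eq unfolding nA_exp g_exp by (simp add: algebra_simps)
    then have "\<sigma> * (2 * ((A *v x) \<bullet> (A *v y) - bb * g x y)) = 0" by (rule quad_zero)
    then show ?thesis using sg by simp
  qed
  define z where "z = Mf x - bb *\<^sub>R x"
  have "g z z = 0" unfolding z_def g_diff_left g_scale_left g_M key by simp
  then show ?thesis unfolding z_def g_zero_iff by simp
qed

lemma invM: "invertible M"
  unfolding M_def by (intro invertible_mult invS transpose_invertible invA)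

lemma bounds: "\<exists>a0 b0. 0 < a0 \<and> a0 \<le> b0 \<and> (\<forall>x. a0 * g x x \<le> nA x \<and> nA x \<le> b0 * g x x)
   \<and> b0 / a0 \<le> cond2 M"
proof -
  define R where "R x = nA x / g x x" for x
  define S where "S = sphere (0::real^'n) 1"
  have S: "compact S" "S \<noteq> {}" unfolding S_def by auto
  have gS: "x \<in> S \<Longrightarrow> g x x > 0" for x
  proof -
    assume "x \<in> S" then have "x \<noteq> 0" unfolding S_def by auto
    then show ?thesis by (rule g_pos)
  qed
  have cont: "continuous_on S R"
    unfolding R_def nA_def g_def
    by (intro continuous_intros) (use gS in \<open>fastforce simp: g_def\<close>)
  obtain xb where xb: "xb \<in> S" "\<And>y. y \<in> S \<Longrightarrow> R y \<le> R xb"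
    using continuous_attains_sup[OF S cont] by blast
  obtain xa where xa: "xa \<in> S" "\<And>y. y \<in> S \<Longrightarrow> R xa \<le> R y"
    using continuous_attains_inf[OF S cont] by blast
  define a0 where "a0 = R xa"
  define b0 where "b0 = R xb"
  have homog: "R x = R ((1 / norm x) *\<^sub>R x)" if "x \<noteq> 0" for x
  proof -
    have "nA ((1 / norm x) *\<^sub>R x) = (1 / norm x)^2 * nA x"
      unfolding nA_def by (simp add: matrix_vector_mult_scaleR power2_eq_square)
    moreover have "g ((1 / norm x) *\<^sub>R x) ((1 / norm x) *\<^sub>R x) = (1 / norm x)^2 * g x x"
      by (simp add: g_lin power2_eq_square)
    ultimately show ?thesis unfolding R_def using that by simp
  qed
  have inS: "x \<noteq> 0 \<Longrightarrow> (1 / norm x) *\<^sub>R x \<in> S" for x unfolding S_def by simp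
  have bnd: "a0 * g x x \<le> nA x \<and> nA x \<le> b0 * g x x" for x
  proof (cases "x = 0")
    case True then show ?thesis by (simp add: nA_def)
  next
    case False
    then have gp: "g x x > 0" by (rule g_pos)
    have "a0 \<le> R x" "R x \<le> b0" unfolding a0_def b0_def
      using xa(2) xb(2) inS[OF False] homog[OF False] by auto
    then show ?thesis unfolding R_def using gp by (simp add: field_simps)
  qed
  have xa0: "xa \<noteq> 0" "xb \<noteq> 0" using xa(1) xb(1) unfolding S_def by auto
  have nApos: "nA x > 0" if "x \<noteq> 0" for x
  proof -
    have "A *v x \<noteq> 0" using inj_matrix_vector_mult[OF invA] that
      by (metis inj_eq matrix_vector_mult_0_right)
    then show ?thesis unfolding nA_def by simp
  qed
  have a0pos: "a0 > 0" unfolding a0_def R_def using nApos[OF xa0(1)] g_pos[OF xa0(1)] by simp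
  have ab: "a0 \<le> b0" unfolding a0_def b0_def using xa xb by auto
  have eqa: "nA xa = a0 * g xa xa" unfolding a0_def R_def using g_pos[OF xa0(1)] by simp
  have eqb: "nA xb = b0 * g xb xb" unfolding b0_def R_def using g_pos[OF xa0(2)] by simp
  have Ma: "Mf xa = a0 *\<^sub>R xa"
    by (rule eigen[of "-1"]) (use bnd eqa in \<open>auto simp: right_diff_distrib\<close>)
  have Mb: "Mf xb = b0 *\<^sub>R xb"
    by (rule eigen[of 1]) (use bnd eqb in \<open>auto simp: right_diff_distrib\<close>)
  have b0le: "b0 \<le> opnorm2 M"
  proof -
    have "norm (M *v xb) \<le> opnorm2 M * norm xb"
      unfolding opnorm2_def by (rule onorm) simp
    then have "\<bar>b0\<bar> * norm xb \<le> opnorm2 M * norm xb" using Mb unfolding Mf_def by simp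
    then show ?thesis using xa0(2) by simp
  qed
  have a0le: "1 / a0 \<le> opnorm2 (matrix_inv M)"
  proof -
    have "matrix_inv M *v (M *v xa) = xa" using inv_vec(2)[OF invM] .
    then have "a0 *\<^sub>R (matrix_inv M *v xa) = xa" using Ma unfolding Mf_def
      by (simp add: matrix_vector_mult_scaleR)
    then have "(1 / a0) *\<^sub>R (a0 *\<^sub>R (matrix_inv M *v xa)) = (1 / a0) *\<^sub>R xa" by simp
    then have "matrix_inv M *v xa = (1 / a0) *\<^sub>R xa" using a0pos by simp
    moreover have "norm (matrix_inv M *v xa) \<le> opnorm2 (matrix_inv M) * norm xa"
      unfolding opnorm2_def by (rule onorm) simp
    ultimately have "(1 / a0) * norm xa \<le> opnorm2 (matrix_inv M) * norm xa" using a0pos by simp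
    then show ?thesis by (rule mult_right_le_imp_le) (use xa0(1) in simp)
  qed
  have "b0 / a0 = b0 * (1 / a0)" by simp
  also have "\<dots> \<le> opnorm2 M * opnorm2 (matrix_inv M)"
    using b0le a0le a0pos ab by (intro mult_mono) auto
  finally have "b0 / a0 \<le> cond2 M" unfolding cond2_def .
  then show ?thesis using a0pos ab bnd by blast
qed

end

fun chebv :: "('v::real_vector \<Rightarrow> 'v) \<Rightarrow> 'v \<Rightarrow> nat \<Rightarrow> 'v \<times> 'v" where
  "chebv N e 0 = (e, 0)"
| "chebv N e (Suc j) = (let t = fst (chebv N e j); u = snd (chebv N e j) in (N t - u + N (N u), N u + t))"

lemma cheb_scalar:
  fixes z w c :: real
  assumes c: "c = (z + w) / 2" and zw: "z * w = 1" and ne: "z \<noteq> w"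
  shows "chebv (\<lambda>x. c * x) 1 j = ((z^j + w^j) / 2, (z^j - w^j) / (z - w))"
proof (induction j)
  case 0 then show ?case by simp
next
  case (Suc j)
  have zw0: "z - w \<noteq> 0" using ne by simp
  have c2: "c * c - 1 = (z - w)^2 / 4"
  proof -
    have "c * c - 1 = ((z + w)^2 - 4 * (z * w)) / 4" unfolding c zw by (simp add: power2_eq_square field_simps)
    also have "\<dots> = (z - w)^2 / 4" by (simp add: power2_eq_square algebra_simps)
    finally show ?thesis .
  qed
  define t where "t = (z^j + w^j) / 2"
  define u where "u = (z^j - w^j) / (z - w)"
  have "chebv (\<lambda>x. c * x) 1 (Suc j) = (c * t - u + c * (c * u), c * u + t)"
    using Suc by (simp add: Let_def t_def u_def)
  moreover have "c * t - u + c * (c * u) = (z^Suc j + w^Suc j) / 2"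
  proof -
    have "c * t - u + c * (c * u) = c * t + (c * c - 1) * u" by (simp add: algebra_simps)
    also have "\<dots> = (z + w) / 2 * ((z^j + w^j) / 2) + (z - w) * (z^j - w^j) / 4"
      unfolding c2 unfolding t_def u_def c using zw0 by (simp add: power2_eq_square field_simps)
    also have "\<dots> = (z^Suc j + w^Suc j) / 2" by (simp add: field_simps)
    finally show ?thesis .
  qed
  moreover have "c * u + t = (z^Suc j - w^Suc j) / (z - w)"
    unfolding t_def u_def c using zw0 by (simp add: field_simps)
  ultimately show ?case by simp
qed

context bcg_setup begin

lemma cheb_energy:
  assumes lin: "linear N" and sa: "\<And>x y. g (N x) y = g x (N y)"
  shows "g (fst (chebv N e j)) (fst (chebv N e j))
         + (g (snd (chebv N e j)) (snd (chebv N e j)) - g (N (snd (chebv N e j))) (N (snd (chebv N e j)))) = g e e"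
proof (induction j)
  case 0 then show ?case using linear_0[OF lin] by simp
next
  case (Suc j)
  define t where "t = fst (chebv N e j)"
  define u where "u = snd (chebv N e j)"
  have IH: "g t t + (g u u - g (N u) (N u)) = g e e" using Suc unfolding t_def u_def .
  have eq: "chebv N e (Suc j) = (N t - u + N (N u), N u + t)" by (simp add: Let_def t_def u_def)
  have Nu': "N (N u + t) = N (N u) + N t" using linear_add[OF lin] .
  have F1: "g (N t) u = g t (N u)" by (rule sa)
  have F2: "g u (N t) = g (N u) t" using sa[of t u] g_sym[of u "N t"] g_sym[of t "N u"] by simp
  have F3: "g u (N (N u)) = g (N u) (N u)" using sa[of u "N u"] by simp
  have F4: "g (N (N u)) u = g (N u) (N u)" using F3 g_sym[of u "N (N u)"] by simp
  show ?case unfolding eq fst_conv snd_conv Nu'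
    using IH F1 F2 F3 F4 by (simp add: g_lin)
qed

definition "xs = matrix_inv A *v b"
definition "e0 = x0 - xs"
definition "W j = span ((\<lambda>i. (Mf ^^ Suc i) e0) ` {..<j})"

lemma W_mono: "j \<le> j' \<Longrightarrow> W j \<subseteq> W j'"
  unfolding W_def by (rule span_mono) auto

lemma W0: "W 0 = {0}" unfolding W_def by simp

lemma W_sub: "subspace (W j)" unfolding W_def by (rule subspace_span)

lemma Mf_W: "w \<in> W j \<Longrightarrow> Mf w \<in> W (Suc j)"
proof -
  assume w: "w \<in> W j"
  have "Mf ` W j = span (Mf ` ((\<lambda>i. (Mf ^^ Suc i) e0) ` {..<j}))"
    unfolding W_def using span_linear_image[OF Mf_linear] by simp
  also have "\<dots> \<subseteq> W (Suc j)"
    unfolding W_def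
  proof (rule span_mono, clarsimp)
    fix l assume "l < j"
    then show "Mf (Mf ((Mf ^^ l) e0)) \<in> (\<lambda>i. Mf ((Mf ^^ i) e0)) ` {..<Suc j}"
      by (intro image_eqI[where x="Suc l"]) auto
  qed
  finally show ?thesis using w by blast
qed

lemma Mf_e0_W: "Mf e0 \<in> W 1" "Mf (Mf e0) \<in> W 2"
proof -
  have "(Mf ^^ Suc 0) e0 \<in> (\<lambda>i. (Mf ^^ Suc i) e0) ` {..<1}" by (rule imageI) simp
  then show "Mf e0 \<in> W 1" unfolding W_def by (simp add: span_base)
  have "(Mf ^^ Suc 1) e0 \<in> (\<lambda>i. (Mf ^^ Suc i) e0) ` {..<2}" by (rule imageI) simp
  then show "Mf (Mf e0) \<in> W 2" unfolding W_def by (simp add: span_base)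
qed

lemma link:
  assumes Ndef: "\<And>x. N x = c *\<^sub>R x - \<alpha> *\<^sub>R Mf x"
  shows "fst (chebv N e0 j) - fst (chebv (\<lambda>x. c * x) 1 j) *\<^sub>R e0 \<in> W j
       \<and> snd (chebv N e0 j) - snd (chebv (\<lambda>x. c * x) 1 j) *\<^sub>R e0 \<in> W (j - 1)"
proof (induction j)
  case 0 then show ?case by (simp add: W0)
next
  case (Suc j)
  have lin: "linear N"
  proof (rule linearI)
    fix x y show "N (x + y) = N x + N y" unfolding Ndef using linear_add[OF Mf_linear]
      by (simp add: algebra_simps)
  next
    fix r x show "N (r *\<^sub>R x) = r *\<^sub>R N x" unfolding Ndef using linear_scale[OF Mf_linear]
      by (simp add: algebra_simps)
  qed
  have NW: "w \<in> W j' \<Longrightarrow> N w \<in> W (Suc j')" for w j'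
    unfolding Ndef using W_mono[of j' "Suc j'"] Mf_W[of w j'] W_sub
    by (auto intro!: subspace_diff subspace_mul)
  have Ne: "N e0 - c *\<^sub>R e0 \<in> W 1"
  proof -
    have "N e0 - c *\<^sub>R e0 = (- \<alpha>) *\<^sub>R Mf e0" unfolding Ndef by simp
    moreover have "(- \<alpha>) *\<^sub>R Mf e0 \<in> W 1" using Mf_e0_W(1) unfolding W_def by (rule span_scale)
    ultimately show ?thesis by metis
  qed
  have NNe: "N (N e0) - (c * c) *\<^sub>R e0 \<in> W 2"
  proof -
    have e1: "N (N e0) - (c * c) *\<^sub>R e0 = c *\<^sub>R (N e0 - c *\<^sub>R e0) - \<alpha> *\<^sub>R Mf (N e0)"
      using Ndef[of "N e0"] by (simp add: scaleR_diff_right)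
    have e2: "Mf (N e0) = c *\<^sub>R Mf e0 - \<alpha> *\<^sub>R Mf (Mf e0)"
      unfolding Ndef using Mf_linear by (simp add: linear_diff linear_scale)
    have m1: "Mf e0 \<in> W 2" using Mf_e0_W(1) W_mono[of 1 2] by auto
    have m2: "N e0 - c *\<^sub>R e0 \<in> W 2" using Ne W_mono[of 1 2] by auto
    have "Mf (N e0) \<in> W 2" unfolding e2 using m1 Mf_e0_W(2) unfolding W_def
      by (intro span_diff span_scale) auto
    then show ?thesis unfolding e1 W_def
      by (rule span_diff[OF span_scale[OF m2[unfolded W_def]] span_scale])
  qed
  define T where "T = fst (chebv N e0 j)"
  define U where "U = snd (chebv N e0 j)"
  define \<tau> where "\<tau> = fst (chebv (\<lambda>x. c * x) 1 j)"
  define \<upsilon> where "\<upsilon> = snd (chebv (\<lambda>x. c * x) 1 j)"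
  define d where "d = T - \<tau> *\<^sub>R e0"
  define f where "f = U - \<upsilon> *\<^sub>R e0"
  have dW: "d \<in> W j" and fW: "f \<in> W (j - 1)" using Suc unfolding d_def f_def T_def U_def \<tau>_def \<upsilon>_def by auto
  have T: "T = d + \<tau> *\<^sub>R e0" and U: "U = f + \<upsilon> *\<^sub>R e0" unfolding d_def f_def by simp_all
  have eqv: "chebv N e0 (Suc j) = (N T - U + N (N U), N U + T)" by (simp add: Let_def T_def U_def)
  have eqs: "chebv (\<lambda>x. c * x) 1 (Suc j) = (c * \<tau> - \<upsilon> + c * (c * \<upsilon>), c * \<upsilon> + \<tau>)"
    by (simp add: Let_def \<tau>_def \<upsilon>_def)
  have id1: "N T - U + N (N U) - (c * \<tau> - \<upsilon> + c * (c * \<upsilon>)) *\<^sub>R e0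
      = N d + \<tau> *\<^sub>R (N e0 - c *\<^sub>R e0) - f + N (N f) + \<upsilon> *\<^sub>R (N (N e0) - (c * c) *\<^sub>R e0)"
    unfolding T U using lin by (simp add: linear_add linear_scale algebra_simps)
  have id2: "N U + T - (c * \<upsilon> + \<tau>) *\<^sub>R e0 = N f + \<upsilon> *\<^sub>R (N e0 - c *\<^sub>R e0) + d"
    unfolding T U using lin by (simp add: linear_add linear_scale algebra_simps)
  show ?case
  proof (cases j)
    case 0
    then have "T = e0" "U = 0" "\<tau> = 1" "\<upsilon> = 0" unfolding T_def U_def \<tau>_def \<upsilon>_def by simp_all
    then show ?thesis unfolding eqv eqs using Ne linear_0[OF lin] 0 by (simp add: W0)
  next
    case (Suc j')
    have "N d \<in> W (Suc j)" using NW dW by blast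
    moreover have "\<tau> *\<^sub>R (N e0 - c *\<^sub>R e0) \<in> W (Suc j)"
      using Ne W_mono[of 1 "Suc j"] W_sub by (auto intro!: subspace_mul)
    moreover have "f \<in> W (Suc j)"
    proof -
      have "j - 1 \<le> Suc j" by simp
      then show ?thesis using fW W_mono[of "j - 1" "Suc j"] by blast
    qed
    moreover have "N (N f) \<in> W (Suc j)" using NW[OF NW[OF fW]] Suc by simp
    moreover have "\<upsilon> *\<^sub>R (N (N e0) - (c * c) *\<^sub>R e0) \<in> W (Suc j)"
      using NNe W_mono[of 2 "Suc j"] W_sub Suc by (auto intro!: subspace_mul)
    ultimately have A1: "fst (chebv N e0 (Suc j)) - fst (chebv (\<lambda>x. c * x) 1 (Suc j)) *\<^sub>R e0 \<in> W (Suc j)"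
      unfolding eqv eqs fst_conv id1 using W_sub by (intro subspace_add subspace_diff) auto
    have "N f \<in> W j" using NW[OF fW] Suc by simp
    moreover have "\<upsilon> *\<^sub>R (N e0 - c *\<^sub>R e0) \<in> W j"
      using Ne W_mono[of 1 j] W_sub Suc by (auto intro!: subspace_mul)
    ultimately have A2: "snd (chebv N e0 (Suc j)) - snd (chebv (\<lambda>x. c * x) 1 (Suc j)) *\<^sub>R e0 \<in> W (Suc j - 1)"
      unfolding eqv eqs snd_conv id2 using W_sub dW by (auto intro!: subspace_add)
    show ?thesis using A1 A2 by simp
  qed
qed

end

context bcg_setup begin

lemma contraction:
  assumes lin: "linear N" and sa: "\<And>x y. g (N x) y = g x (N y)"
    and bd: "\<And>x. \<bar>g (N x) x\<bar> \<le> g x x"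
  shows "g (N x) (N x) \<le> g x x"
proof -
  define y where "y = N x"
  have e1: "g (N (x + y)) (x + y) - g (N (x - y)) (x - y) = 2 * g (N x) y + 2 * g (N y) x"
    using lin by (simp add: linear_add linear_diff g_lin algebra_simps)
  have "g (N y) x = g (N x) y" using sa[of y x] g_sym[of y "N x"] by simp
  then have e2: "g (N (x + y)) (x + y) - g (N (x - y)) (x - y) = 4 * g y y"
    using e1 unfolding y_def by simp
  have b1: "g (N (x + y)) (x + y) \<le> g (x + y) (x + y)" using bd[of "x + y"] by simp
  have b2: "- g (N (x - y)) (x - y) \<le> g (x - y) (x - y)" using bd[of "x - y"] by simp
  have e3: "g (x + y) (x + y) + g (x - y) (x - y) = 2 * g x x + 2 * g y y"
    by (simp add: g_lin g_sym[of y x])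
  have "g y y \<le> g x x" using e2 b1 b2 e3 by linarith
  then show ?thesis unfolding y_def .
qed

lemma A_xs: "A *v xs = b" unfolding xs_def using inv_vec(1)[OF invA] .

lemma Ae0: "A *v e0 = - r0"
  unfolding e0_def r0_def using A_xs by (simp add: matrix_vector_mult_diff_distrib)

lemma M_vec: "M *v y = (Sig ** transpose A) *v (A *v y)"
  unfolding M_def by (simp add: matrix_vector_mul_assoc)

lemma Mf_L: "Mf (L v) = L (Bf v)"
  unfolding Mf_def M_vec A_L by (simp add: L_def)

lemma Mf_pow: "(Mf ^^ Suc i) e0 = - L ((Bf ^^ i) r0)"
proof (induction i)
  case 0
  have "Mf e0 = L (A *v e0)" unfolding Mf_def M_vec L_def ..
  then show ?case using Ae0 linear_neg[OF L_linear] by simp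
next
  case (Suc i)
  have "(Mf ^^ Suc (Suc i)) e0 = Mf (- L ((Bf ^^ i) r0))" using Suc by simp
  also have "\<dots> = - Mf (L ((Bf ^^ i) r0))" using linear_neg[OF Mf_linear] by simp
  also have "\<dots> = - L ((Bf ^^ Suc i) r0)" by (simp add: Mf_L)
  finally show ?case .
qed

lemma L_g: "g y (L v) = (A *v y) \<bullet> v"
proof -
  have "L v = Sig *v (transpose A *v v)" unfolding L_def by (simp add: matrix_vector_mul_assoc)
  then have "g y (L v) = y \<bullet> (transpose A *v v)" unfolding g_def by (simp add: SG)
  also have "\<dots> = (A *v y) \<bullet> v" using inner_mat_transpose[of A y v] by simp
  finally show ?thesis .
qed

end

context bcg_nz begin

lemma mainm: "ON m" "V m = K m" using main[of m] by auto

lemma W_L: "W m \<subseteq> L ` V m"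
  unfolding W_def
proof (rule span_minimal)
  show "subspace (L ` V m)" unfolding V_def by (intro linear_subspace_image L_linear subspace_span)
  show "(\<lambda>i. (Mf ^^ Suc i) e0) ` {..<m} \<subseteq> L ` V m"
  proof clarify
    fix i assume i: "i < m"
    have "(Bf ^^ i) r0 \<in> K m" unfolding K_def using i by (intro span_base) auto
    then have "- (Bf ^^ i) r0 \<in> V m" using mainm(2) unfolding K_def V_def by (simp add: span_neg)
    moreover have "(Mf ^^ Suc i) e0 = L (- (Bf ^^ i) r0)" using Mf_pow linear_neg[OF L_linear] by simp
    ultimately show "(Mf ^^ Suc i) e0 \<in> L ` V m" by blast
  qed
qed

lemma em_eq: "xk m - xs = e0 + L (vk m)"
  using mean_formula[OF mainm(1)] unfolding e0_def by simp

lemma opt: assumes "w \<in> W m" shows "g (xk m - xs) (xk m - xs) \<le> g (e0 + w) (e0 + w)"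
proof -
  define em where "em = xk m - xs"
  obtain v where v: "v \<in> V m" "w = L v" using assms W_L by blast
  have Aem: "A *v em = - rk m"
    unfolding em_def rk_def using A_xs by (simp add: matrix_vector_mult_diff_distrib)
  have orth: "g em (L u) = 0" if "u \<in> V m" for u
    unfolding L_g Aem using rk_orth_V[OF mainm(1) that] by (simp add: inner_commute)
  define d where "d = L (v - vk m)"
  have dv: "v - vk m \<in> V m" unfolding V_def using v(1) vk_V[of m] unfolding V_def by (rule span_diff)
  have "e0 + w = em + d" unfolding d_def em_eq[folded em_def] v(2) using linear_diff[OF L_linear] by simp
  then have "g (e0 + w) (e0 + w) = g em em + 2 * g em d + g d d" by (simp add: g_lin g_sym[of d em])
  moreover have "g em d = 0" unfolding d_def using orth[OF dv] .
  ultimately show ?thesis using g_nonneg[of d] unfolding em_def by simp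
qed

end

context bcg_nz begin

lemma key_bound:
  defines "\<kappa> \<equiv> cond2 M"
  defines "\<rho> \<equiv> (sqrt \<kappa> - 1) / (sqrt \<kappa> + 1)"
  shows "g (xk m - xs) (xk m - xs) \<le> (2 * \<rho> ^ m)^2 * g e0 e0 \<and> \<rho> \<ge> 0"
proof -
  obtain a0 b0 where a0: "0 < a0" and ab: "a0 \<le> b0"
    and bnd: "\<And>x. a0 * g x x \<le> nA x \<and> nA x \<le> b0 * g x x" and kap: "b0 / a0 \<le> \<kappa>"
    using bounds unfolding \<kappa>_def by blast
  have "1 \<le> b0 / a0" using ab a0 by simp
  then have k1: "1 \<le> \<kappa>" using kap by linarith
  then have sk: "1 \<le> sqrt \<kappa>" by simp
  have rho0: "\<rho> \<ge> 0" unfolding \<rho>_def using sk by simp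
  have ge0: "g e0 e0 \<ge> 0" by (rule g_nonneg)
  show ?thesis
  proof (cases "m = 0")
    case True
    have "vk 0 = 0" unfolding vk_def by simp
    then have "xk m - xs = e0" using em_eq True by (simp add: L_def)
    then show ?thesis using rho0 ge0 True by simp
  next
    case mpos: False
    show ?thesis
    proof (cases "a0 = b0")
      case True
      have eig: "Mf x = a0 *\<^sub>R x" for x
      proof (rule eigen[of 1])
        show "\<And>y. 1 * (nA y - a0 * g y y) \<le> 0" using bnd True by simp
        show "nA x = a0 * g x x" using bnd[of x] True by simp
      qed simp
      have "- ((1 / a0) *\<^sub>R Mf e0) \<in> W 1" using Mf_e0_W(1) unfolding W_def by (intro span_neg span_scale)
      then have "- ((1 / a0) *\<^sub>R Mf e0) \<in> W m" using W_mono[of 1 m] mpos by auto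
      from opt[OF this] have "g (xk m - xs) (xk m - xs) \<le> 0" using eig a0 by simp
      moreover have "0 \<le> (2 * \<rho> ^ m)^2 * g e0 e0" using ge0 by simp
      ultimately show ?thesis using rho0 by linarith
    next
      case False
      then have ab': "a0 < b0" using ab by simp
      define k' where "k' = b0 / a0"
      define s where "s = sqrt k'"
      have k'1: "k' > 1" unfolding k'_def using ab' a0 by simp
      have s1: "s > 1" unfolding s_def using k'1 by simp
      have s2: "s^2 = k'" unfolding s_def using k'1 by simp
      define z where "z = (s + 1) / (s - 1)"
      define w where "w = (s - 1) / (s + 1)"
      define c where "c = (z + w) / 2"
      define \<alpha> where "\<alpha> = 2 / (b0 - a0)"
      have ss: "s * s > 1" using s1 by (metis less_1_mult)
      have zw: "z * w = 1" unfolding z_def w_def using s1 ss by (simp add: field_simps)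
      have zw_ne: "z \<noteq> w"
      proof
        assume "z = w"
        moreover have "w < 1" unfolding w_def using s1 by simp
        moreover have "z > 1" unfolding z_def using s1 by simp
        ultimately show False by simp
      qed
      have w0: "w \<ge> 0" unfolding w_def using s1 by simp
      have z0: "z > 0" unfolding z_def using s1 by simp
      have c_s: "c = (s^2 + 1) / (s^2 - 1)"
      proof -
        have "s - 1 \<noteq> 0" "s + 1 \<noteq> 0" "s^2 - 1 \<noteq> 0" using s1 ss by (auto simp: power2_eq_square)
        moreover have "s^2 - 1 = (s - 1) * (s + 1)" by (simp add: power2_eq_square algebra_simps)
        ultimately show ?thesis unfolding c_def z_def w_def
          by (simp add: field_simps power2_eq_square)
      qed
      have c_ab: "c = (b0 + a0) / (b0 - a0)"
      proof -
        have e1: "b0 / a0 + 1 = (b0 + a0) / a0" "b0 / a0 - 1 = (b0 - a0) / a0" using a0 by (simp_all add: field_simps)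
        have "c = ((b0 + a0) / a0) / ((b0 - a0) / a0)" unfolding c_s s2 k'_def e1 ..
        also have "\<dots> = (b0 + a0) / (b0 - a0)" using a0 by simp
        finally show ?thesis .
      qed
      have al0: "\<alpha> > 0" unfolding \<alpha>_def using ab' by simp
      have dne: "b0 - a0 \<noteq> 0" using ab' by simp
      have c1: "c - \<alpha> * a0 = 1"
      proof -
        have "c - \<alpha> * a0 = (b0 + a0) / (b0 - a0) - (2 * a0) / (b0 - a0)" unfolding c_ab \<alpha>_def by simp
        also have "\<dots> = ((b0 + a0) - 2 * a0) / (b0 - a0)" by (rule diff_divide_distrib[symmetric])
        also have "\<dots> = (b0 - a0) / (b0 - a0)" by (rule arg_cong[where f="\<lambda>t. t / (b0 - a0)"]) simp
        finally show ?thesis using dne by simp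
      qed
      have c2: "c - \<alpha> * b0 = -1"
      proof -
        have "c - \<alpha> * b0 = (b0 + a0) / (b0 - a0) - (2 * b0) / (b0 - a0)" unfolding c_ab \<alpha>_def by simp
        also have "\<dots> = ((b0 + a0) - 2 * b0) / (b0 - a0)" by (rule diff_divide_distrib[symmetric])
        also have "\<dots> = (- (b0 - a0)) / (b0 - a0)" by (rule arg_cong[where f="\<lambda>t. t / (b0 - a0)"]) simp
        also have "\<dots> = - ((b0 - a0) / (b0 - a0))" by (rule minus_divide_left[symmetric])
        also have "\<dots> = -1" using dne by simp
        finally show ?thesis .
      qed
      define N where "N x = c *\<^sub>R x - \<alpha> *\<^sub>R Mf x" for x
      have lin: "linear N"
      proof (rule linearI)
        fix x y show "N (x + y) = N x + N y" unfolding N_def using linear_add[OF Mf_linear]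
          by (simp add: algebra_simps)
      next
        fix r x show "N (r *\<^sub>R x) = r *\<^sub>R N x" unfolding N_def using linear_scale[OF Mf_linear]
          by (simp add: algebra_simps)
      qed
      have sa: "g (N x) y = g x (N y)" for x y
        unfolding N_def by (simp add: g_lin g_M g_sym[of x "Mf y"] inner_commute)
      have bd: "\<bar>g (N x) x\<bar> \<le> g x x" for x
      proof -
        have e: "g (N x) x = c * g x x - \<alpha> * nA x" unfolding N_def nA_def by (simp add: g_lin g_M)
        have "\<alpha> * (a0 * g x x) \<le> \<alpha> * nA x" "\<alpha> * nA x \<le> \<alpha> * (b0 * g x x)"
          using bnd[of x] al0 by (simp_all add: mult_left_mono)
        then have "(c - \<alpha> * b0) * g x x \<le> g (N x) x" "g (N x) x \<le> (c - \<alpha> * a0) * g x x"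
          unfolding e by (simp_all add: algebra_simps)
        then show ?thesis unfolding c1 c2 by simp
      qed
      define T where "T = fst (chebv N e0 m)"
      define U where "U = snd (chebv N e0 m)"
      define \<tau> where "\<tau> = fst (chebv (\<lambda>x. c * x) 1 m)"
      have tau: "\<tau> = (z^m + w^m) / 2" unfolding \<tau>_def cheb_scalar[OF c_def zw zw_ne] by simp
      have TT: "g T T \<le> g e0 e0"
      proof -
        have "g T T + (g U U - g (N U) (N U)) = g e0 e0"
          unfolding T_def U_def by (rule cheb_energy[OF lin sa])
        moreover have "g (N U) (N U) \<le> g U U" by (rule contraction[OF lin sa bd])
        ultimately show ?thesis by simp
      qed
      have TW: "T - \<tau> *\<^sub>R e0 \<in> W m" using link[of N c \<alpha> m] N_def unfolding T_def \<tau>_def by blast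
      have zwm: "z^m * w^m = 1" using zw by (metis power_mult_distrib power_one)
      have tau_pos: "\<tau> > 0" unfolding tau using z0 w0 by (simp add: add_pos_nonneg)
      have tau_inv: "1 / \<tau> \<le> 2 * w^m"
      proof -
        have "z^m / 2 \<le> \<tau>" unfolding tau using w0 by simp
        moreover have "z^m > 0" using z0 by simp
        ultimately have "1 / \<tau> \<le> 1 / (z^m / 2)" using tau_pos by (intro divide_left_mono) auto
        also have "\<dots> = 2 * w^m" using zwm z0 by (simp add: field_simps)
        finally show ?thesis .
      qed
      have "(1 / \<tau>) *\<^sub>R (T - \<tau> *\<^sub>R e0) \<in> W m" using TW unfolding W_def by (rule span_scale)
      from opt[OF this] have "g (xk m - xs) (xk m - xs) \<le> g ((1 / \<tau>) *\<^sub>R T) ((1 / \<tau>) *\<^sub>R T)"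
        using tau_pos by (simp add: scaleR_diff_right)
      also have "\<dots> = (1 / \<tau>)^2 * g T T" by (simp add: g_lin power2_eq_square)
      also have "\<dots> \<le> (1 / \<tau>)^2 * g e0 e0" using TT by (simp add: mult_left_mono)
      also have "\<dots> \<le> (2 * \<rho> ^ m)^2 * g e0 e0"
      proof (rule mult_right_mono[OF _ ge0])
        have "w \<le> \<rho>"
        proof -
          have "k' \<le> \<kappa>" using kap k'_def by simp
          then have sS: "s \<le> sqrt \<kappa>" unfolding s_def by simp
          have "(s - 1) * (sqrt \<kappa> + 1) \<le> (sqrt \<kappa> - 1) * (s + 1)" using sS by (simp add: algebra_simps)
          moreover have "s + 1 > 0" using s1 by simp
          moreover have "sqrt \<kappa> + 1 > 0" using sk by linarith
          ultimately show ?thesis unfolding w_def \<rho>_def by (simp add: field_simps)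
        qed
        then have "w^m \<le> \<rho>^m" using w0 by (simp add: power_mono)
        then have "1 / \<tau> \<le> 2 * \<rho>^m" using tau_inv by simp
        then show "(1 / \<tau>)^2 \<le> (2 * \<rho> ^ m)^2" using tau_pos by (intro power_mono) auto
      qed
      finally show ?thesis using rho0 by simp
    qed
  qed
qed

end

theorem proposition9:
  fixes A Sig0 :: "real^'n^'n" and b x0 :: "real^'n" and m :: nat
  assumes "invertible A"
    and "x0 \<noteq> matrix_inv A *v b"
    and "spd Sig0"
    and "\<forall>k\<in>{1..m}. bcg_stilde A Sig0 b x0 k \<noteq> 0"
  shows "Bnorm (matrix_inv Sig0) (bcg_x A Sig0 b x0 m - matrix_inv A *v b)
           / Bnorm (matrix_inv Sig0) (x0 - matrix_inv A *v b)
         \<le> 2 * ((sqrt (cond2 (Sig0 ** transpose A ** A)) - 1)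
                / (sqrt (cond2 (Sig0 ** transpose A ** A)) + 1)) ^ m"
proof -
  interpret bcg_nz A Sig0 b x0 m
    by unfold_locales (use assms in auto)
  define \<rho> where "\<rho> = (sqrt (cond2 M) - 1) / (sqrt (cond2 M) + 1)"
  define em where "em = xk m - xs"
  have kb: "g em em \<le> (2 * \<rho> ^ m)^2 * g e0 e0" "\<rho> \<ge> 0"
    using key_bound unfolding \<rho>_def em_def by auto
  have Bn: "Bnorm (matrix_inv Sig0) v = sqrt (g v v)" for v
    unfolding Bnorm_def g_def G_def ..
  have lhs1: "bcg_x A Sig0 b x0 m - matrix_inv A *v b = em"
    unfolding bcg_x_def em_def xk_def dirs_def xs_def ..
  have lhs2: "x0 - matrix_inv A *v b = e0" unfolding e0_def xs_def ..
  have e0nz: "e0 \<noteq> 0" unfolding e0_def xs_def using assms(2) by simp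
  have gpos: "sqrt (g e0 e0) > 0" using g_pos[OF e0nz] by simp
  have "sqrt (g em em) \<le> sqrt ((2 * \<rho> ^ m)^2 * g e0 e0)" using kb(1) by (rule real_sqrt_le_mono)
  also have "\<dots> = (2 * \<rho> ^ m) * sqrt (g e0 e0)" using kb(2) by (simp add: real_sqrt_mult)
  finally have "sqrt (g em em) / sqrt (g e0 e0) \<le> 2 * \<rho> ^ m" using gpos by (simp add: divide_le_eq)
  then show ?thesis unfolding Bn lhs1 lhs2 \<rho>_def M_def .
qed

end
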